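(* Let $\gamma\in(0,1)$. For every $\varepsilon>0$ there exists a constant $C=C(\gamma,\varepsilon)$ such that the following holds. Let $T\ge1$, let $\xi=(\xi_1,\dots,\xi_T)$ be i.i.d. Bernoulli($\gamma$) random variables, let $N:\{0,1\}^T\to\{0,1,\dots,T\}$ be any deterministic function, and set $S(\xi,m)=\sum_{i=1}^m\xi_i$. If $\mathbb E[N(\xi)]\ge C$, then $$(\gamma-\varepsilon)\,\mathbb E[N(\xi)]\le\mathbb E[S(\xi,N(\xi))]\le(\gamma+\varepsilon)\,\mathbb E[N(\xi)].$$ (That is, $\mathbb E[S(\xi,N(\xi))]/\mathbb E[N(\xi)]\to\gamma$ as $\mathbb E[N(\xi)]\to\infty$, uniformly in $T$ and $N$.) *)

theory Defs
  imports "HOL-Probability.Probability"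
begin

text \<open>The law of xi = (xi_1,...,xi_T), i.i.d. Bernoulli(gamma), encoded as a random
  function on indices 0..T-1 (coordinate i+1 of the paper is index i here);
  coordinates outside {..<T} are fixed to False.\<close>
definition bern_vec :: "real \<Rightarrow> nat \<Rightarrow> (nat \<Rightarrow> bool) pmf" where
  "bern_vec \<gamma> T = Pi_pmf {..<T} False (\<lambda>_. bernoulli_pmf \<gamma>)"

definition S :: "(nat \<Rightarrow> bool) \<Rightarrow> nat \<Rightarrow> nat" where
  "S x m = (\<Sum>i<m. of_bool (x i))"

end

theory Submission
  imports Defs
begin

lemma summ: assumes "0 \<le> q" "q < (1::real)" shows "summable (\<lambda>n. real n * q ^ n)"
proof -
  have "summable (\<lambda>n. diffs (\<lambda>_. 1::real) n * q ^ n)"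
    by (rule termdiff_converges[where K=1]) (use assms in \<open>auto intro: summable_geometric\<close>)
  hence s: "summable (\<lambda>n. real (Suc n) * q ^ n)" by (simp add: diffs_def)
  show ?thesis
    by (rule summable_comparison_test'[OF s]) (use assms in \<open>auto intro!: mult_right_mono\<close>)
qed
lemma bin: assumes "m \<le> T" "0 \<le> \<gamma>" "\<gamma> \<le> 1"
  shows "map_pmf (\<lambda>x. S x m) (bern_vec \<gamma> T) = binomial_pmf m \<gamma>"
proof -
  have "binomial_pmf m \<gamma> = map_pmf (\<lambda>f. card {i\<in>{..<m}. f i}) (Pi_pmf {..<m} False (\<lambda>_. bernoulli_pmf \<gamma>))"
    by (rule binomial_pmf_altdef') (use assms in auto)
  also have "Pi_pmf {..<m} False (\<lambda>_. bernoulli_pmf \<gamma>) = map_pmf (\<lambda>f x. if x \<in> {..<m} then f x else False) (bern_vec \<gamma> T)"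
    unfolding bern_vec_def by (rule Pi_pmf_subset) (use assms in auto)
  also have "map_pmf (\<lambda>f. card {i\<in>{..<m}. f i}) (map_pmf (\<lambda>f x. if x \<in> {..<m} then f x else False) (bern_vec \<gamma> T))
     = map_pmf (\<lambda>x. S x m) (bern_vec \<gamma> T)"
    unfolding map_pmf_comp S_def
    by (intro map_pmf_cong refl) (auto intro!: arg_cong[where f=card])
  finally show ?thesis ..
qed
lemma tail_up: assumes "m \<le> T" "0 < \<gamma>" "\<gamma> < 1" "\<delta> \<ge> 0"
  shows "measure_pmf.prob (bern_vec \<gamma> T) {x. real (S x m) \<ge> m * \<gamma> + \<delta> * m} \<le> exp (-2 * \<delta>^2 * m)"
proof (cases "m = 0")
  case True thus ?thesis by simp
next
  case False
  interpret binomial_distribution m \<gamma> by unfold_locales (use assms in auto)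
  have "measure_pmf.prob (bern_vec \<gamma> T) {x. real (S x m) \<ge> m * \<gamma> + \<delta> * m}
     = measure_pmf.prob (binomial_pmf m \<gamma>) {k. real k \<ge> m * \<gamma> + \<delta> * m}"
    by (subst bin[symmetric]) (use assms in auto)
  also have "\<dots> \<le> exp (-2 * (\<delta> * m)^2 / m)"
    by (rule prob_ge) (use False assms in auto)
  also have "-2 * (\<delta> * m)^2 / m = -2 * \<delta>^2 * m" using False by (simp add: power2_eq_square)
  finally show ?thesis .
qed
lemma tail_lo: assumes "m \<le> T" "0 < \<gamma>" "\<gamma> < 1" "\<delta> \<ge> 0"
  shows "measure_pmf.prob (bern_vec \<gamma> T) {x. real (S x m) \<le> m * \<gamma> - \<delta> * m} \<le> exp (-2 * \<delta>^2 * m)"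
proof (cases "m = 0")
  case True thus ?thesis by simp
next
  case False
  interpret binomial_distribution m \<gamma> by unfold_locales (use assms in auto)
  have "measure_pmf.prob (bern_vec \<gamma> T) {x. real (S x m) \<le> m * \<gamma> - \<delta> * m}
     = measure_pmf.prob (binomial_pmf m \<gamma>) {k. real k \<le> m * \<gamma> - \<delta> * m}"
    by (subst bin[symmetric]) (use assms in auto)
  also have "\<dots> \<le> exp (-2 * (\<delta> * m)^2 / m)"
    by (rule prob_le) (use False assms in auto)
  also have "-2 * (\<delta> * m)^2 / m = -2 * \<delta>^2 * m" using False by (simp add: power2_eq_square)
  finally show ?thesis .
qed
lemma fin: "finite (set_pmf (bern_vec \<gamma> T))"
proof -
  have "set_pmf (bern_vec \<gamma> T) \<subseteq> PiE_dflt {..<T} False (\<lambda>_. UNIV)"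
    using set_Pi_pmf_subset[of "{..<T}" False "\<lambda>_. bernoulli_pmf \<gamma>"]
    unfolding bern_vec_def PiE_dflt_def by auto
  moreover have "finite (PiE_dflt {..<T} False (\<lambda>_. UNIV :: bool set))"
    by (rule finite_PiE_dflt) auto
  ultimately show ?thesis by (rule finite_subset)
qed

lemma intg[simp]: "integrable (measure_pmf (bern_vec \<gamma> T)) (f :: _ \<Rightarrow> real)"
  by (rule integrable_measure_pmf_finite[OF fin])

lemma S_le: "S x m \<le> m"
proof -
  have "S x m \<le> (\<Sum>i<m. 1)" unfolding S_def by (intro sum_mono) auto
  thus ?thesis by simp
qed

lemma EU_up: assumes "m \<le> T" "0 < \<gamma>" "\<gamma> < 1" "\<delta> \<ge> 0"
  shows "measure_pmf.expectation (bern_vec \<gamma> T) (\<lambda>x. max 0 (real (S x m) - (\<gamma> + \<delta>) * m))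
     \<le> m * exp (-2 * \<delta>^2 * m)"
proof -
  let ?A = "{x. real (S x m) \<ge> m * \<gamma> + \<delta> * m}"
  have "measure_pmf.expectation (bern_vec \<gamma> T) (\<lambda>x. max 0 (real (S x m) - (\<gamma> + \<delta>) * m))
     \<le> measure_pmf.expectation (bern_vec \<gamma> T) (\<lambda>x. real m * (indicator ?A x :: real))"
  proof (rule integral_mono)
    fix x
    have "0 \<le> \<delta> * real m" "0 \<le> \<gamma> * real m" "real (S x m) \<le> m" using assms S_le[of x m] by auto
    thus "max 0 (real (S x m) - (\<gamma> + \<delta>) * m) \<le> real m * (indicator ?A x :: real)" by (auto simp: indicator_def algebra_simps)
  qed auto
  also have "\<dots> = m * measure_pmf.prob (bern_vec \<gamma> T) ?A" by simp
  also have "\<dots> \<le> m * exp (-2 * \<delta>^2 * m)"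
    by (intro mult_left_mono tail_up) (use assms in auto)
  finally show ?thesis .
qed

lemma EU_lo: assumes "m \<le> T" "0 < \<gamma>" "\<gamma> < 1" "\<delta> \<ge> 0"
  shows "measure_pmf.expectation (bern_vec \<gamma> T) (\<lambda>x. max 0 ((\<gamma> - \<delta>) * m - real (S x m)))
     \<le> m * exp (-2 * \<delta>^2 * m)"
proof -
  let ?A = "{x. real (S x m) \<le> m * \<gamma> - \<delta> * m}"
  have "measure_pmf.expectation (bern_vec \<gamma> T) (\<lambda>x. max 0 ((\<gamma> - \<delta>) * m - real (S x m)))
     \<le> measure_pmf.expectation (bern_vec \<gamma> T) (\<lambda>x. real m * (indicator ?A x :: real))"
  proof (rule integral_mono)
    fix x
    have "\<gamma> * m \<le> m" using assms by (simp add: mult_left_le_one_le)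
    moreover have "0 \<le> \<delta> * real m" "0 \<le> \<gamma> * real m" using assms by auto
    moreover have "(\<gamma> - \<delta>) * m = \<gamma> * m - \<delta> * m" "real m * \<gamma> = \<gamma> * m" by (auto simp: algebra_simps)
    ultimately show "max 0 ((\<gamma> - \<delta>) * m - real (S x m)) \<le> real m * (indicator ?A x :: real)"
      by (cases "real (S x m) \<le> real m * \<gamma> - \<delta> * real m") (simp_all add: indicator_def mult.commute)
  qed auto
  also have "\<dots> = m * measure_pmf.prob (bern_vec \<gamma> T) ?A" by simp
  also have "\<dots> \<le> m * exp (-2 * \<delta>^2 * m)"
    by (intro mult_left_mono tail_lo) (use assms in auto)
  finally show ?thesis .
qed
lemma main_up: assumes "0 < \<gamma>" "\<gamma> < 1" "\<delta> \<ge> 0" "\<forall>x. N x \<le> T"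
  shows "measure_pmf.expectation (bern_vec \<gamma> T) (\<lambda>x. real (S x (N x)))
     - (\<gamma> + \<delta>) * measure_pmf.expectation (bern_vec \<gamma> T) (\<lambda>x. real (N x))
     \<le> (\<Sum>m\<le>T. real m * exp (-2 * \<delta>^2) ^ m)"
proof -
  let ?E = "measure_pmf.expectation (bern_vec \<gamma> T)"
  let ?U = "\<lambda>x m. max 0 (real (S x m) - (\<gamma> + \<delta>) * m)"
  have "?E (\<lambda>x. real (S x (N x))) - (\<gamma> + \<delta>) * ?E (\<lambda>x. real (N x))
      = ?E (\<lambda>x. real (S x (N x)) - (\<gamma> + \<delta>) * real (N x))"
    by (simp add: Bochner_Integration.integral_diff)
  also have "\<dots> \<le> ?E (\<lambda>x. \<Sum>m\<le>T. ?U x m)"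
  proof (rule integral_mono)
    fix x
    have "real (S x (N x)) - (\<gamma> + \<delta>) * real (N x) \<le> ?U x (N x)" by simp
    also have "\<dots> \<le> (\<Sum>m\<le>T. ?U x m)"
      by (rule member_le_sum) (use assms in auto)
    finally show "real (S x (N x)) - (\<gamma> + \<delta>) * real (N x) \<le> (\<Sum>m\<le>T. ?U x m)" .
  qed auto
  also have "\<dots> = (\<Sum>m\<le>T. ?E (\<lambda>x. ?U x m))"
    by (rule Bochner_Integration.integral_sum) auto
  also have "\<dots> \<le> (\<Sum>m\<le>T. real m * exp (-2 * \<delta>^2 * m))"
    by (intro sum_mono EU_up) (use assms in auto)
  also have "\<dots> = (\<Sum>m\<le>T. real m * exp (-2 * \<delta>^2) ^ m)"
    by (intro sum.cong refl) (simp add: exp_of_nat_mult[symmetric] mult.commute)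
  finally show ?thesis .
qed

lemma main_lo: assumes "0 < \<gamma>" "\<gamma> < 1" "\<delta> \<ge> 0" "\<forall>x. N x \<le> T"
  shows "(\<gamma> - \<delta>) * measure_pmf.expectation (bern_vec \<gamma> T) (\<lambda>x. real (N x))
     - measure_pmf.expectation (bern_vec \<gamma> T) (\<lambda>x. real (S x (N x)))
     \<le> (\<Sum>m\<le>T. real m * exp (-2 * \<delta>^2) ^ m)"
proof -
  let ?E = "measure_pmf.expectation (bern_vec \<gamma> T)"
  let ?U = "\<lambda>x m. max 0 ((\<gamma> - \<delta>) * m - real (S x m))"
  have "(\<gamma> - \<delta>) * ?E (\<lambda>x. real (N x)) - ?E (\<lambda>x. real (S x (N x)))
      = ?E (\<lambda>x. (\<gamma> - \<delta>) * real (N x) - real (S x (N x)))"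
    by (simp add: Bochner_Integration.integral_diff)
  also have "\<dots> \<le> ?E (\<lambda>x. \<Sum>m\<le>T. ?U x m)"
  proof (rule integral_mono)
    fix x
    have "(\<gamma> - \<delta>) * real (N x) - real (S x (N x)) \<le> ?U x (N x)" by simp
    also have "\<dots> \<le> (\<Sum>m\<le>T. ?U x m)"
      by (rule member_le_sum) (use assms in auto)
    finally show "(\<gamma> - \<delta>) * real (N x) - real (S x (N x)) \<le> (\<Sum>m\<le>T. ?U x m)" .
  qed auto
  also have "\<dots> = (\<Sum>m\<le>T. ?E (\<lambda>x. ?U x m))"
    by (rule Bochner_Integration.integral_sum) auto
  also have "\<dots> \<le> (\<Sum>m\<le>T. real m * exp (-2 * \<delta>^2 * m))"
    by (intro sum_mono EU_lo) (use assms in auto)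
  also have "\<dots> = (\<Sum>m\<le>T. real m * exp (-2 * \<delta>^2) ^ m)"
    by (intro sum.cong refl) (simp add: exp_of_nat_mult[symmetric] mult.commute)
  finally show ?thesis .
qed

theorem mainTheorem11:
  fixes \<gamma> \<epsilon> :: real
  assumes "0 < \<gamma>" "\<gamma> < 1" "\<epsilon> > 0"
  shows "\<exists>C::real. \<forall>(T::nat) (N::(nat \<Rightarrow> bool) \<Rightarrow> nat).
           T \<ge> 1 \<longrightarrow> (\<forall>x. N x \<le> T) \<longrightarrow>
           measure_pmf.expectation (bern_vec \<gamma> T) (\<lambda>x. real (N x)) \<ge> C \<longrightarrow>
           (\<gamma> - \<epsilon>) * measure_pmf.expectation (bern_vec \<gamma> T) (\<lambda>x. real (N x))
              \<le> measure_pmf.expectation (bern_vec \<gamma> T) (\<lambda>x. real (S x (N x))) \<and>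
           measure_pmf.expectation (bern_vec \<gamma> T) (\<lambda>x. real (S x (N x)))
              \<le> (\<gamma> + \<epsilon>) * measure_pmf.expectation (bern_vec \<gamma> T) (\<lambda>x. real (N x))"
proof -
  define \<delta> where "\<delta> = \<epsilon> / 2"
  define q where "q = exp (-2 * \<delta>^2)"
  define K where "K = (\<Sum>m. real m * q ^ m)"
  have d: "\<delta> > 0" using assms by (simp add: \<delta>_def)
  have q: "0 \<le> q" "q < 1" using d by (auto simp: q_def)
  have sK: "summable (\<lambda>m. real m * q ^ m)" by (rule summ[OF q])
  have Kb: "(\<Sum>m\<le>T. real m * q ^ m) \<le> K" for T
    unfolding K_def by (rule sum_le_suminf[OF sK]) (use q in auto)
  show ?thesis
  proof (intro exI[of _ "K / \<delta>"] allI impI)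
    fix T :: nat and N :: "(nat \<Rightarrow> bool) \<Rightarrow> nat"
    assume NT: "\<forall>x. N x \<le> T" and C: "K / \<delta> \<le> measure_pmf.expectation (bern_vec \<gamma> T) (\<lambda>x. real (N x))"
    let ?EN = "measure_pmf.expectation (bern_vec \<gamma> T) (\<lambda>x. real (N x))"
    let ?ES = "measure_pmf.expectation (bern_vec \<gamma> T) (\<lambda>x. real (S x (N x)))"
    have KE: "K \<le> \<delta> * ?EN" using C d by (simp add: field_simps)
    have up: "?ES - (\<gamma> + \<delta>) * ?EN \<le> K"
      using main_up[OF assms(1,2) less_imp_le[OF d] NT] Kb[of T] unfolding q_def by linarith
    have lo: "(\<gamma> - \<delta>) * ?EN - ?ES \<le> K"
      using main_lo[OF assms(1,2) less_imp_le[OF d] NT] Kb[of T] unfolding q_def by linarith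
    have e: "\<epsilon> = 2 * \<delta>" by (simp add: \<delta>_def)
    show "(\<gamma> - \<epsilon>) * ?EN \<le> ?ES \<and> ?ES \<le> (\<gamma> + \<epsilon>) * ?EN"
      using up lo KE unfolding e by (auto simp: algebra_simps)
  qed
qed
end
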